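(* Let $G$ be a finite group such that every column sum of its character table, $\Gamma_C(G)=\sum_{\chi\in\mathrm{Irr}(G)}\chi(C)$ for $C\in\mathrm{Conj}(G)$, is a nonnegative integer. Then (1) $s(G)\geq \Gamma_e(G)$; and (2) if in addition $G$ is totally orthogonal, then $s(G)\ge\Gamma_e(G)$, with $s(G)=\Gamma_e(G)$ if and only if $G$ is abelian.
   Context: For a finite group $G$, $\mathrm{Irr}(G)$ denotes the set of irreducible complex characters and $\mathrm{Conj}(G)$ the set of conjugacy classes; $s(G)$ is the sum of all entries of the character table, and $\Gamma_e(G)=\sum_{\chi\in\mathrm{Irr}(G)}\chi(e)$ is the sum of the irreducible character degrees. A finite group is totally orthogonal if every irreducible complex representation of it is realizable over $\mathbb{R}$. *)

theory Defs
  imports "HOL-Algebra.Group" "Jordan_Normal_Form.Matrix" "HOL-Library.Complex_Order"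
begin

definition conj_class :: "('g, 'b) monoid_scheme \<Rightarrow> 'g \<Rightarrow> 'g set" where
  "conj_class G x = {g \<otimes>\<^bsub>G\<^esub> x \<otimes>\<^bsub>G\<^esub> inv\<^bsub>G\<^esub> g | g. g \<in> carrier G}"

definition Conj :: "('g, 'b) monoid_scheme \<Rightarrow> 'g set set" where
  "Conj G = conj_class G ` carrier G"

definition mtrace :: "'a::comm_ring_1 mat \<Rightarrow> 'a" where
  "mtrace A = (\<Sum>i<dim_row A. A $$ (i, i))"

definition is_rep :: "('g, 'b) monoid_scheme \<Rightarrow> nat \<Rightarrow> ('g \<Rightarrow> complex mat) \<Rightarrow> bool" where
  "is_rep G n \<rho> \<longleftrightarrow>
     (\<forall>x\<in>carrier G. \<rho> x \<in> carrier_mat n n) \<and>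
     \<rho> \<one>\<^bsub>G\<^esub> = 1\<^sub>m n \<and>
     (\<forall>x\<in>carrier G. \<forall>y\<in>carrier G. \<rho> (x \<otimes>\<^bsub>G\<^esub> y) = \<rho> x * \<rho> y)"

definition is_subspace :: "nat \<Rightarrow> complex vec set \<Rightarrow> bool" where
  "is_subspace n W \<longleftrightarrow> W \<subseteq> carrier_vec n \<and> 0\<^sub>v n \<in> W \<and>
     (\<forall>v\<in>W. \<forall>w\<in>W. v + w \<in> W) \<and> (\<forall>c. \<forall>v\<in>W. c \<cdot>\<^sub>v v \<in> W)"

definition irreducible_rep :: "('g, 'b) monoid_scheme \<Rightarrow> nat \<Rightarrow> ('g \<Rightarrow> complex mat) \<Rightarrow> bool" where
  "irreducible_rep G n \<rho> \<longleftrightarrow> is_rep G n \<rho> \<and> n > 0 \<and>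
     (\<forall>W. is_subspace n W \<and> (\<forall>x\<in>carrier G. \<forall>w\<in>W. \<rho> x *\<^sub>v w \<in> W)
          \<longrightarrow> W = {0\<^sub>v n} \<or> W = carrier_vec n)"

definition character :: "('g, 'b) monoid_scheme \<Rightarrow> ('g \<Rightarrow> complex mat) \<Rightarrow> 'g \<Rightarrow> complex" where
  "character G \<rho> = (\<lambda>x\<in>carrier G. mtrace (\<rho> x))"

definition Irr :: "('g, 'b) monoid_scheme \<Rightarrow> ('g \<Rightarrow> complex) set" where
  "Irr G = {character G \<rho> | n \<rho>. irreducible_rep G n \<rho>}"

definition class_val :: "('g \<Rightarrow> complex) \<Rightarrow> 'g set \<Rightarrow> complex" where
  "class_val \<chi> C = \<chi> (SOME g. g \<in> C)"

definition Gamma :: "('g, 'b) monoid_scheme \<Rightarrow> 'g set \<Rightarrow> complex" where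
  "Gamma G C = (\<Sum>\<chi>\<in>Irr G. class_val \<chi> C)"

definition Gamma_e :: "('g, 'b) monoid_scheme \<Rightarrow> complex" where
  "Gamma_e G = (\<Sum>\<chi>\<in>Irr G. \<chi> \<one>\<^bsub>G\<^esub>)"

definition s_table :: "('g, 'b) monoid_scheme \<Rightarrow> complex" where
  "s_table G = (\<Sum>\<chi>\<in>Irr G. \<Sum>C\<in>Conj G. class_val \<chi> C)"

definition realizable_over_R :: "('g, 'b) monoid_scheme \<Rightarrow> nat \<Rightarrow> ('g \<Rightarrow> complex mat) \<Rightarrow> bool" where
  "realizable_over_R G n \<rho> \<longleftrightarrow>
     (\<exists>P Q. P \<in> carrier_mat n n \<and> Q \<in> carrier_mat n n \<and> P * Q = 1\<^sub>m n \<and> Q * P = 1\<^sub>m n \<and>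
        (\<forall>x\<in>carrier G. \<forall>i<n. \<forall>j<n. (P * \<rho> x * Q) $$ (i, j) \<in> \<real>))"

definition totally_orthogonal :: "('g, 'b) monoid_scheme \<Rightarrow> bool" where
  "totally_orthogonal G \<longleftrightarrow> (\<forall>n \<rho>. irreducible_rep G n \<rho> \<longrightarrow> realizable_over_R G n \<rho>)"

end

theory Submission
  imports Defs "Jordan_Normal_Form.Spectral_Radius" "HOL-Algebra.Multiplicative_Group"
begin


lemma mult_unit_vec_index:
  assumes A: "A \<in> carrier_mat m n" and i: "i < m" and j: "j < n"
  shows "(A *\<^sub>v unit_vec n j) $ i = (A $$ (i, j) :: 'a :: comm_ring_1)"
proof -
  have "(A *\<^sub>v unit_vec n j) $ i = (\<Sum>k\<in>{0..<n}. A $$ (i,k) * (if k = j then 1 else 0))"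
    using A i j by (simp add: scalar_prod_def)
  also have "\<dots> = A $$ (i,j)" using j by (simp add: if_distrib cong: if_cong)
  finally show ?thesis .
qed

lemma mat_eq_by_vec:
  assumes A: "A \<in> carrier_mat m n" and B: "B \<in> carrier_mat m n"
    and h: "\<And>v. v \<in> carrier_vec n \<Longrightarrow> A *\<^sub>v v = B *\<^sub>v v"
  shows "A = (B :: 'a :: comm_ring_1 mat)"
proof (rule eq_matI)
  fix i j assume i: "i < dim_row B" and j: "j < dim_col B"
  then have i': "i < m" and j': "j < n" using B by auto
  have "A $$ (i,j) = (A *\<^sub>v unit_vec n j) $ i" using mult_unit_vec_index[OF A i' j'] by simp
  also have "\<dots> = (B *\<^sub>v unit_vec n j) $ i" using h[of "unit_vec n j"] by simp
  also have "\<dots> = B $$ (i,j)" using mult_unit_vec_index[OF B i' j'] by simp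
  finally show "A $$ (i,j) = B $$ (i,j)" .
qed (use A B in auto)

lemma mtrace_comm:
  assumes A: "A \<in> carrier_mat n m" and B: "B \<in> carrier_mat m n"
  shows "mtrace (A * B) = mtrace (B * (A :: 'a :: comm_ring_1 mat))"
proof -
  have "mtrace (A * B) = (\<Sum>i<n. \<Sum>k<m. A $$ (i,k) * B $$ (k,i))"
    using A B by (simp add: mtrace_def scalar_prod_def atLeast0LessThan)
  also have "\<dots> = (\<Sum>k<m. \<Sum>i<n. B $$ (k,i) * A $$ (i,k))"
    by (subst sum.swap) (simp add: mult.commute)
  also have "\<dots> = mtrace (B * A)"
    using A B by (simp add: mtrace_def scalar_prod_def atLeast0LessThan)
  finally show ?thesis .
qed

lemma mtrace_one: "mtrace (1\<^sub>m n :: 'a :: comm_ring_1 mat) = of_nat n"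
  by (simp add: mtrace_def)

lemma is_subspace_carrier: "is_subspace n (carrier_vec n)"
  unfolding is_subspace_def by auto

context
  fixes G :: "('g, 'b) monoid_scheme" (structure)
  assumes grp: "group G"
begin

interpretation group G by (rule grp)

lemma rep_carrier: "is_rep G n \<rho> \<Longrightarrow> x \<in> carrier G \<Longrightarrow> \<rho> x \<in> carrier_mat n n"
  unfolding is_rep_def by auto

lemma rep_mult: "is_rep G n \<rho> \<Longrightarrow> x \<in> carrier G \<Longrightarrow> y \<in> carrier G \<Longrightarrow> \<rho> (x \<otimes> y) = \<rho> x * \<rho> y"
  unfolding is_rep_def by auto

lemma rep_one: "is_rep G n \<rho> \<Longrightarrow> \<rho> \<one> = 1\<^sub>m n"
  unfolding is_rep_def by auto

lemma rep_inv_l: "is_rep G n \<rho> \<Longrightarrow> x \<in> carrier G \<Longrightarrow> \<rho> (inv x) * \<rho> x = 1\<^sub>m n"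
  by (metis rep_mult rep_one inv_closed l_inv)

lemma rep_inv_r: "is_rep G n \<rho> \<Longrightarrow> x \<in> carrier G \<Longrightarrow> \<rho> x * \<rho> (inv x) = 1\<^sub>m n"
  by (metis rep_mult rep_one inv_closed r_inv)

lemma character_one: "is_rep G n \<rho> \<Longrightarrow> character G \<rho> \<one> = of_nat n"
  by (simp add: character_def rep_one mtrace_one)

lemma character_conj:
  assumes r: "is_rep G n \<rho>" and g: "g \<in> carrier G" and h: "h \<in> carrier G"
  shows "character G \<rho> (h \<otimes> g \<otimes> inv h) = character G \<rho> g"
proof -
  have c: "\<rho> h \<in> carrier_mat n n" "\<rho> g \<in> carrier_mat n n" "\<rho> (inv h) \<in> carrier_mat n n"
    using r g h by (auto intro: rep_carrier)
  have "mtrace (\<rho> (h \<otimes> g \<otimes> inv h)) = mtrace (\<rho> h * (\<rho> g * \<rho> (inv h)))"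
    using r g h c by (simp add: rep_mult)
  also have "\<dots> = mtrace ((\<rho> g * \<rho> (inv h)) * \<rho> h)"
    using c by (intro mtrace_comm) auto
  also have "\<dots> = mtrace (\<rho> g)"
    using c r h by (simp add: rep_inv_l)
  finally show ?thesis using g h by (simp add: character_def)
qed

end


lemma mult_zero_vec_r: "A \<in> carrier_mat m n \<Longrightarrow> A *\<^sub>v 0\<^sub>v n = (0\<^sub>v m :: 'a :: comm_ring_1 vec)"
  by (intro eq_vecI) (auto simp: scalar_prod_def)

lemma smult_zero_vec_r: "c \<cdot>\<^sub>v 0\<^sub>v n = (0\<^sub>v n :: 'a :: comm_ring_1 vec)"
  by (intro eq_vecI) auto

lemma smult_mat_mult_vec: "A \<in> carrier_mat m n \<Longrightarrow> v \<in> carrier_vec n \<Longrightarrow>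
   (c \<cdot>\<^sub>m A) *\<^sub>v v = c \<cdot>\<^sub>v (A *\<^sub>v v :: 'a :: comm_ring_1 vec)"
  by (intro eq_vecI) (auto simp: scalar_prod_def sum_distrib_left ac_simps)

lemma smult_comm_vec: "c \<cdot>\<^sub>v (d \<cdot>\<^sub>v v) = d \<cdot>\<^sub>v (c \<cdot>\<^sub>v (v :: 'a :: comm_ring_1 vec))"
  by (intro eq_vecI) auto

lemma smult_one_mat_vec: "v \<in> carrier_vec n \<Longrightarrow> (c \<cdot>\<^sub>m 1\<^sub>m n) *\<^sub>v v = c \<cdot>\<^sub>v (v :: complex vec)"
  using smult_mat_mult_vec[of "1\<^sub>m n" n n v c] by simp

context
  fixes G :: "('g, 'b) monoid_scheme" (structure)
  assumes grp: "group G"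
begin

interpretation group G by (rule grp)

lemma schur_scalar:
  assumes irr: "irreducible_rep G n \<rho>" and T: "T \<in> carrier_mat n n"
    and comm: "\<And>x. x \<in> carrier G \<Longrightarrow> T * \<rho> x = \<rho> x * T"
  shows "\<exists>c. T = c \<cdot>\<^sub>m 1\<^sub>m n"
proof -
  from irr have r: "is_rep G n \<rho>" and n: "n > 0"
    and irrW: "\<And>W. is_subspace n W \<Longrightarrow> (\<forall>x\<in>carrier G. \<forall>w\<in>W. \<rho> x *\<^sub>v w \<in> W) \<Longrightarrow> W = {0\<^sub>v n} \<or> W = carrier_vec n"
    unfolding irreducible_rep_def by auto
  obtain c where "eigenvalue T c" using spectrum_non_empty[OF T n] unfolding spectrum_def by auto
  then obtain v where v: "v \<in> carrier_vec n" "v \<noteq> 0\<^sub>v n" "T *\<^sub>v v = c \<cdot>\<^sub>v v"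
    unfolding eigenvalue_def eigenvector_def using T by auto
  define W where "W = {w \<in> carrier_vec n. T *\<^sub>v w = c \<cdot>\<^sub>v w}"
  have sub: "is_subspace n W"
    unfolding is_subspace_def W_def
    using T by (auto simp: mult_zero_vec_r smult_zero_vec_r mult_add_distrib_mat_vec[OF T] smult_add_distrib_vec mult_mat_vec[OF T] smult_comm_vec)
  have inv: "\<forall>x\<in>carrier G. \<forall>w\<in>W. \<rho> x *\<^sub>v w \<in> W"
  proof (intro ballI)
    fix x w assume x: "x \<in> carrier G" and w: "w \<in> W"
    have rx: "\<rho> x \<in> carrier_mat n n" using rep_carrier[OF grp r x] .
    have wc: "w \<in> carrier_vec n" and tw: "T *\<^sub>v w = c \<cdot>\<^sub>v w" using w W_def by auto
    have "T *\<^sub>v (\<rho> x *\<^sub>v w) = (T * \<rho> x) *\<^sub>v w" using T rx wc by simp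
    also have "\<dots> = (\<rho> x * T) *\<^sub>v w" using comm x by simp
    also have "\<dots> = \<rho> x *\<^sub>v (c \<cdot>\<^sub>v w)" using T rx wc tw by simp
    also have "\<dots> = c \<cdot>\<^sub>v (\<rho> x *\<^sub>v w)" using mult_mat_vec[OF rx wc] .
    finally show "\<rho> x *\<^sub>v w \<in> W" using rx wc W_def by auto
  qed
  have "v \<in> W" using v W_def by auto
  then have "W = carrier_vec n" using irrW[OF sub inv] v by auto
  then have "T = c \<cdot>\<^sub>m 1\<^sub>m n"
    by (intro mat_eq_by_vec[OF T]) (auto simp: W_def smult_one_mat_vec)
  then show ?thesis by blast
qed

end


lemma zero_mat_mult_vec: "v \<in> carrier_vec n \<Longrightarrow> 0\<^sub>m m n *\<^sub>v v = (0\<^sub>v m :: 'a :: comm_ring_1 vec)"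
  by (intro eq_vecI) (auto simp: scalar_prod_def)

lemma vec_minus_zero_eq: "v \<in> carrier_vec n \<Longrightarrow> w \<in> carrier_vec n \<Longrightarrow> v - w = 0\<^sub>v n \<Longrightarrow> v = (w :: 'a :: ab_group_add vec)"
proof (intro eq_vecI)
  fix i assume v: "v \<in> carrier_vec n" and w: "w \<in> carrier_vec n" and e: "v - w = 0\<^sub>v n" and i: "i < dim_vec w"
  have "(v - w) $ i = 0" using e i w by simp
  then show "v $ i = w $ i" using i by simp
qed auto

context
  fixes G :: "('g, 'b) monoid_scheme" (structure)
  assumes grp: "group G"
begin

interpretation group G by (rule grp)

lemma schur_inter:
  assumes irr1: "irreducible_rep G n \<rho>" and irr2: "irreducible_rep G m \<sigma>"
    and T: "T \<in> carrier_mat m n"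
    and comm: "\<And>x. x \<in> carrier G \<Longrightarrow> \<sigma> x * T = T * \<rho> x"
    and nz: "T \<noteq> 0\<^sub>m m n"
  shows "character G \<sigma> = character G \<rho>"
proof -
  from irr1 have r: "is_rep G n \<rho>"
    and irrW: "\<And>W. is_subspace n W \<Longrightarrow> (\<forall>x\<in>carrier G. \<forall>w\<in>W. \<rho> x *\<^sub>v w \<in> W) \<Longrightarrow> W = {0\<^sub>v n} \<or> W = carrier_vec n"
    unfolding irreducible_rep_def by auto
  from irr2 have s: "is_rep G m \<sigma>"
    and irrW2: "\<And>W. is_subspace m W \<Longrightarrow> (\<forall>x\<in>carrier G. \<forall>w\<in>W. \<sigma> x *\<^sub>v w \<in> W) \<Longrightarrow> W = {0\<^sub>v m} \<or> W = carrier_vec m"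
    unfolding irreducible_rep_def by auto
  define K where "K = {v \<in> carrier_vec n. T *\<^sub>v v = 0\<^sub>v m}"
  have subK: "is_subspace n K"
    unfolding is_subspace_def K_def
    using T by (auto simp: mult_zero_vec_r smult_zero_vec_r mult_add_distrib_mat_vec[OF T] mult_mat_vec[OF T])
  have invK: "\<forall>x\<in>carrier G. \<forall>w\<in>K. \<rho> x *\<^sub>v w \<in> K"
  proof (intro ballI)
    fix x w assume x: "x \<in> carrier G" and w: "w \<in> K"
    have rx: "\<rho> x \<in> carrier_mat n n" using rep_carrier[OF grp r x] .
    have sx: "\<sigma> x \<in> carrier_mat m m" using rep_carrier[OF grp s x] .
    have wc: "w \<in> carrier_vec n" and tw: "T *\<^sub>v w = 0\<^sub>v m" using w K_def by auto
    have "T *\<^sub>v (\<rho> x *\<^sub>v w) = (T * \<rho> x) *\<^sub>v w" using T rx wc by simp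
    also have "\<dots> = (\<sigma> x * T) *\<^sub>v w" using comm x by simp
    also have "\<dots> = \<sigma> x *\<^sub>v (T *\<^sub>v w)" using T sx wc by simp
    also have "\<dots> = 0\<^sub>v m" using tw sx by (simp add: mult_zero_vec_r)
    finally show "\<rho> x *\<^sub>v w \<in> K" using rx wc K_def by auto
  qed
  have "K \<noteq> carrier_vec n"
  proof
    assume "K = carrier_vec n"
    then have "T = 0\<^sub>m m n"
      by (intro mat_eq_by_vec[OF T]) (auto simp: K_def zero_mat_mult_vec)
    with nz show False by simp
  qed
  then have K0: "K = {0\<^sub>v n}" using irrW[OF subK invK] by auto
  have inj: "\<And>v w. v \<in> carrier_vec n \<Longrightarrow> w \<in> carrier_vec n \<Longrightarrow> T *\<^sub>v v = T *\<^sub>v w \<Longrightarrow> v = w"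
  proof -
    fix v w assume v: "v \<in> carrier_vec n" and w: "w \<in> carrier_vec n" and e: "T *\<^sub>v v = T *\<^sub>v w"
    have "T *\<^sub>v (v - w) = T *\<^sub>v v - T *\<^sub>v w" using mult_minus_distrib_mat_vec[OF T v w] .
    also have "\<dots> = 0\<^sub>v m" using e T w by simp
    finally have "v - w \<in> K" using v w K_def by auto
    then have "v - w = 0\<^sub>v n" using K0 by auto
    then show "v = w" using vec_minus_zero_eq v w by blast
  qed
  define I where "I = (\<lambda>v. T *\<^sub>v v) ` carrier_vec n"
  have subI: "is_subspace m I"
    unfolding is_subspace_def
  proof (intro conjI ballI allI)
    show "I \<subseteq> carrier_vec m" using T I_def by auto
    show "0\<^sub>v m \<in> I" unfolding I_def using T
      by (intro image_eqI[of _ _ "0\<^sub>v n"]) (auto simp: mult_zero_vec_r)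
  next
    fix a b assume "a \<in> I" "b \<in> I"
    then obtain a' b' where a': "a' \<in> carrier_vec n" "a = T *\<^sub>v a'" and b': "b' \<in> carrier_vec n" "b = T *\<^sub>v b'"
      unfolding I_def by auto
    then show "a + b \<in> I" unfolding I_def
      by (intro image_eqI[of _ _ "a' + b'"]) (auto simp: mult_add_distrib_mat_vec[OF T])
  next
    fix d a assume "a \<in> I"
    then obtain a' where a': "a' \<in> carrier_vec n" "a = T *\<^sub>v a'" unfolding I_def by auto
    then show "d \<cdot>\<^sub>v a \<in> I" unfolding I_def
      by (intro image_eqI[of _ _ "d \<cdot>\<^sub>v a'"]) (auto simp: mult_mat_vec[OF T])
  qed
  have invI: "\<forall>x\<in>carrier G. \<forall>w\<in>I. \<sigma> x *\<^sub>v w \<in> I"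
  proof (intro ballI)
    fix x w assume x: "x \<in> carrier G" and w: "w \<in> I"
    then obtain w' where w': "w' \<in> carrier_vec n" "w = T *\<^sub>v w'" unfolding I_def by auto
    have rx: "\<rho> x \<in> carrier_mat n n" using rep_carrier[OF grp r x] .
    have sx: "\<sigma> x \<in> carrier_mat m m" using rep_carrier[OF grp s x] .
    have "\<sigma> x *\<^sub>v w = (\<sigma> x * T) *\<^sub>v w'" using w' T sx by simp
    also have "\<dots> = (T * \<rho> x) *\<^sub>v w'" using comm x by simp
    also have "\<dots> = T *\<^sub>v (\<rho> x *\<^sub>v w')" using T rx w' by simp
    finally show "\<sigma> x *\<^sub>v w \<in> I" unfolding I_def using rx w' by auto
  qed
  have "I \<noteq> {0\<^sub>v m}"
  proof
    assume I0: "I = {0\<^sub>v m}"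
    then have "T = 0\<^sub>m m n"
      by (intro mat_eq_by_vec[OF T]) (auto simp: I_def zero_mat_mult_vec)
    with nz show False by simp
  qed
  then have Ic: "I = carrier_vec m" using irrW2[OF subI invI] by auto
  define u where "u = (\<lambda>j. SOME u. u \<in> carrier_vec n \<and> T *\<^sub>v u = unit_vec m j)"
  have u: "u j \<in> carrier_vec n \<and> T *\<^sub>v u j = unit_vec m j" for j
  proof -
    have "unit_vec m j \<in> I" using Ic by simp
    then have "\<exists>u. u \<in> carrier_vec n \<and> T *\<^sub>v u = unit_vec m j" unfolding I_def by auto
    then show ?thesis unfolding u_def by (rule someI_ex)
  qed
  define S where "S = mat n m (\<lambda>(i,j). u j $ i)"
  have S: "S \<in> carrier_mat n m" unfolding S_def by simp
  have colS: "col S j = u j" if j: "j < m" for j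
    using u[of j] j by (intro eq_vecI) (auto simp: S_def)
  have TS: "T * S = 1\<^sub>m m"
  proof (rule eq_matI)
    fix i j assume i: "i < dim_row (1\<^sub>m m)" and j: "j < dim_col (1\<^sub>m m)"
    have "(T * S) $$ (i,j) = row T i \<bullet> col S j" using i j T S by simp
    also have "\<dots> = (T *\<^sub>v u j) $ i" using i j T colS by simp
    also have "\<dots> = 1\<^sub>m m $$ (i,j)" using u[of j] i j by simp
    finally show "(T * S) $$ (i,j) = 1\<^sub>m m $$ (i,j)" .
  qed (use T S in auto)
  have ST: "S * T = 1\<^sub>m n"
  proof (rule mat_eq_by_vec)
    show "S * T \<in> carrier_mat n n" using S T by simp
    show "1\<^sub>m n \<in> carrier_mat n n" by simp
    fix v :: "complex vec" assume v: "v \<in> carrier_vec n"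
    have e: "T * (S * T) = T" using TS S T by (metis assoc_mult_mat left_mult_one_mat)
    have "T *\<^sub>v ((S * T) *\<^sub>v v) = (T * (S * T)) *\<^sub>v v" using S T v by (metis assoc_mult_mat_vec mult_carrier_mat)
    also have "\<dots> = T *\<^sub>v v" using e by simp
    finally have "(S * T) *\<^sub>v v = v" using inj S T v by (meson mult_carrier_mat mult_mat_vec_carrier)
    then show "(S * T) *\<^sub>v v = 1\<^sub>m n *\<^sub>v v" using v by simp
  qed
  show ?thesis
  proof
    fix x show "character G \<sigma> x = character G \<rho> x"
    proof (cases "x \<in> carrier G")
      case True
      have rx: "\<rho> x \<in> carrier_mat n n" using rep_carrier[OF grp r True] .
      have sx: "\<sigma> x \<in> carrier_mat m m" using rep_carrier[OF grp s True] .
      have "mtrace (\<sigma> x) = mtrace (\<sigma> x * (T * S))" using TS sx by simp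
      also have "\<dots> = mtrace ((T * \<rho> x) * S)" using sx T S comm[OF True]
        by (metis assoc_mult_mat)
      also have "\<dots> = mtrace (T * (\<rho> x * S))" using T rx S by simp
      also have "\<dots> = mtrace ((\<rho> x * S) * T)" using T rx S by (intro mtrace_comm) auto
      also have "\<dots> = mtrace (\<rho> x)" using ST rx S T by simp
      finally show ?thesis using True by (simp add: character_def)
    qed (simp add: character_def)
  qed
qed

end


definition avg :: "('g,'b) monoid_scheme \<Rightarrow> ('g \<Rightarrow> complex mat) \<Rightarrow> complex mat \<Rightarrow> ('g \<Rightarrow> complex mat) \<Rightarrow> complex mat" where
  "avg G \<sigma> X \<rho> = mat (dim_row X) (dim_col X) (\<lambda>(i,l). \<Sum>g\<in>carrier G. (\<sigma> g * X * \<rho> (inv\<^bsub>G\<^esub> g)) $$ (i,l))"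

definition Emat :: "nat \<Rightarrow> nat \<Rightarrow> nat \<Rightarrow> nat \<Rightarrow> complex mat" where
  "Emat m n j k = mat m n (\<lambda>(a,b). if a = j \<and> b = k then 1 else 0)"

lemma Emat_carrier[simp]: "Emat m n j k \<in> carrier_mat m n"
  by (simp add: Emat_def)

lemma msum_left:
  assumes B: "B \<in> carrier_mat p m" and M: "\<And>g. g \<in> A \<Longrightarrow> M g \<in> carrier_mat m n"
  shows "B * mat m n (\<lambda>(i,l). \<Sum>g\<in>A. M g $$ (i,l)) = mat p n (\<lambda>(i,l). \<Sum>g\<in>A. (B * M g) $$ (i,l))"
proof (rule eq_matI)
  fix i l assume i: "i < dim_row (mat p n (\<lambda>(i,l). \<Sum>g\<in>A. (B * M g) $$ (i,l)))"
    and l: "l < dim_col (mat p n (\<lambda>(i,l). \<Sum>g\<in>A. (B * M g) $$ (i,l)))"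
  then have i: "i < p" and l: "l < n" by auto
  have "(B * mat m n (\<lambda>(i,l). \<Sum>g\<in>A. M g $$ (i,l))) $$ (i,l) = (\<Sum>c<m. B $$ (i,c) * (\<Sum>g\<in>A. M g $$ (c,l)))"
    using B i l by (simp add: scalar_prod_def atLeast0LessThan)
  also have "\<dots> = (\<Sum>g\<in>A. \<Sum>c<m. B $$ (i,c) * M g $$ (c,l))"
    by (simp add: sum_distrib_left sum.swap[of _ A])
  also have "\<dots> = (\<Sum>g\<in>A. (B * M g) $$ (i,l))"
  proof (intro sum.cong refl)
    fix g assume "g \<in> A"
    then have "M g \<in> carrier_mat m n" by (rule M)
    then show "(\<Sum>c<m. B $$ (i,c) * M g $$ (c,l)) = (B * M g) $$ (i,l)"
      using B i l by (simp add: scalar_prod_def atLeast0LessThan carrier_matD)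
  qed
  finally show "(B * mat m n (\<lambda>(i,l). \<Sum>g\<in>A. M g $$ (i,l))) $$ (i,l) = mat p n (\<lambda>(i,l). \<Sum>g\<in>A. (B * M g) $$ (i,l)) $$ (i,l)"
    using i l by simp
qed (use B in auto)

lemma msum_right:
  assumes C: "C \<in> carrier_mat n q" and M: "\<And>g. g \<in> A \<Longrightarrow> M g \<in> carrier_mat m n"
  shows "mat m n (\<lambda>(i,l). \<Sum>g\<in>A. M g $$ (i,l)) * C = mat m q (\<lambda>(i,l). \<Sum>g\<in>A. (M g * C) $$ (i,l))"
proof (rule eq_matI)
  fix i l assume i: "i < dim_row (mat m q (\<lambda>(i,l). \<Sum>g\<in>A. (M g * C) $$ (i,l)))"
    and l: "l < dim_col (mat m q (\<lambda>(i,l). \<Sum>g\<in>A. (M g * C) $$ (i,l)))"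
  then have i: "i < m" and l: "l < q" by auto
  have "(mat m n (\<lambda>(i,l). \<Sum>g\<in>A. M g $$ (i,l)) * C) $$ (i,l) = (\<Sum>c<n. (\<Sum>g\<in>A. M g $$ (i,c)) * C $$ (c,l))"
    using C i l by (simp add: scalar_prod_def atLeast0LessThan)
  also have "\<dots> = (\<Sum>g\<in>A. \<Sum>c<n. M g $$ (i,c) * C $$ (c,l))"
    by (simp add: sum_distrib_right sum.swap[of _ A])
  also have "\<dots> = (\<Sum>g\<in>A. (M g * C) $$ (i,l))"
  proof (intro sum.cong refl)
    fix g assume "g \<in> A"
    then have "M g \<in> carrier_mat m n" by (rule M)
    then show "(\<Sum>c<n. M g $$ (i,c) * C $$ (c,l)) = (M g * C) $$ (i,l)"
      using C i l by (simp add: scalar_prod_def atLeast0LessThan carrier_matD)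
  qed
  finally show "(mat m n (\<lambda>(i,l). \<Sum>g\<in>A. M g $$ (i,l)) * C) $$ (i,l) = mat m q (\<lambda>(i,l). \<Sum>g\<in>A. (M g * C) $$ (i,l)) $$ (i,l)"
    using i l by simp
qed (use C in auto)

lemma triple_entry:
  assumes A: "A \<in> carrier_mat m m'" and B: "B \<in> carrier_mat n' n"
    and j: "j < m'" and k: "k < n'" and i: "i < m" and l: "l < n"
  shows "(A * Emat m' n' j k * B) $$ (i,l) = A $$ (i,j) * B $$ (k,l)"
proof -
  have AE: "(A * Emat m' n' j k) $$ (i,b) = (if b = k then A $$ (i,j) else 0)" if b: "b < n'" for b
  proof -
    have "(A * Emat m' n' j k) $$ (i,b) = (\<Sum>a\<in>{0..<m'}. A $$ (i,a) * (if a = j \<and> b = k then 1 else 0))"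
      using A i b by (simp add: scalar_prod_def Emat_def)
    also have "\<dots> = (if b = k then A $$ (i,j) else 0)"
      using j by (cases "b = k") (simp_all add: if_distrib cong: if_cong)
    finally show ?thesis .
  qed
  have "(A * Emat m' n' j k * B) $$ (i,l) = (\<Sum>b\<in>{0..<n'}. (A * Emat m' n' j k) $$ (i,b) * B $$ (b,l))"
    using A B i l by (simp add: scalar_prod_def carrier_matD Emat_def)
  also have "\<dots> = (\<Sum>b\<in>{0..<n'}. (if b = k then A $$ (i,j) * B $$ (b,l) else 0))"
    using AE by (intro sum.cong) auto
  also have "\<dots> = A $$ (i,j) * B $$ (k,l)"
    using k by (simp add: if_distrib cong: if_cong)
  finally show ?thesis .
qed

context
  fixes G :: "('g, 'b) monoid_scheme" (structure)
  assumes grp: "group G"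
begin

interpretation group G by (rule grp)

lemma avg_carrier: "X \<in> carrier_mat m n \<Longrightarrow> avg G \<sigma> X \<rho> \<in> carrier_mat m n"
  by (simp add: avg_def)

lemma avg_inter:
  assumes s: "is_rep G m \<sigma>" and r: "is_rep G n \<rho>" and X: "X \<in> carrier_mat m n"
    and h: "h \<in> carrier G"
  shows "\<sigma> h * avg G \<sigma> X \<rho> = avg G \<sigma> X \<rho> * \<rho> h"
proof -
  have Mc: "\<sigma> g * X * \<rho> (inv g) \<in> carrier_mat m n" if "g \<in> carrier G" for g
    using that rep_carrier[OF grp s] rep_carrier[OF grp r] X by (meson inv_closed mult_carrier_mat)
  have sh: "\<sigma> h \<in> carrier_mat m m" using rep_carrier[OF grp s h] .
  have rh: "\<rho> h \<in> carrier_mat n n" using rep_carrier[OF grp r h] .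
  have avg: "avg G \<sigma> X \<rho> = mat m n (\<lambda>(i,l). \<Sum>g\<in>carrier G. (\<sigma> g * X * \<rho> (inv g)) $$ (i,l))"
    using X by (simp add: avg_def)
  define F where "F = (\<lambda>g. \<sigma> g * X * \<rho> (inv g) * \<rho> h)"
  have key: "\<sigma> h * (\<sigma> g * X * \<rho> (inv g)) = F (h \<otimes> g)" if g: "g \<in> carrier G" for g
  proof -
    have sg: "\<sigma> g \<in> carrier_mat m m" using rep_carrier[OF grp s g] .
    have rig: "\<rho> (inv g) \<in> carrier_mat n n" using rep_carrier[OF grp r] g by simp
    have "\<rho> (inv (h \<otimes> g)) * \<rho> h = \<rho> (inv (h \<otimes> g) \<otimes> h)" using rep_mult[OF grp r] g h by simp
    also have "inv (h \<otimes> g) \<otimes> h = inv g" using g h by (simp add: inv_mult_group m_assoc)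
    finally have "\<rho> (inv (h \<otimes> g)) * \<rho> h = \<rho> (inv g)" .
    note e = this
    have ri: "\<rho> (inv (h \<otimes> g)) \<in> carrier_mat n n" using rep_carrier[OF grp r] g h by simp
    define P where "P = \<sigma> h * \<sigma> g * X"
    have P: "P \<in> carrier_mat m n" using sh sg X P_def by simp
    have "F (h \<otimes> g) = P * \<rho> (inv (h \<otimes> g)) * \<rho> h"
      unfolding F_def P_def using g h by (simp add: rep_mult[OF grp s])
    also have "\<dots> = P * (\<rho> (inv (h \<otimes> g)) * \<rho> h)" using P ri rh by (rule assoc_mult_mat)
    also have "\<dots> = P * \<rho> (inv g)" using e by simp
    also have "\<dots> = (\<sigma> h * (\<sigma> g * X)) * \<rho> (inv g)" unfolding P_def
      using assoc_mult_mat[OF sh sg X] by simp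
    also have "\<dots> = \<sigma> h * ((\<sigma> g * X) * \<rho> (inv g))"
      by (rule assoc_mult_mat[OF sh _ rig]) (use sg X in simp)
    finally show ?thesis by simp
  qed
  have "\<sigma> h * avg G \<sigma> X \<rho> = mat m n (\<lambda>(i,l). \<Sum>g\<in>carrier G. (\<sigma> h * (\<sigma> g * X * \<rho> (inv g))) $$ (i,l))"
    unfolding avg by (rule msum_left[OF sh Mc])
  also have "\<dots> = mat m n (\<lambda>(i,l). \<Sum>g\<in>carrier G. F (h \<otimes> g) $$ (i,l))"
    using key by (intro cong_mat refl) (auto intro!: sum.cong)
  also have "\<dots> = mat m n (\<lambda>(i,l). \<Sum>g\<in>carrier G. F g $$ (i,l))"
  proof (intro cong_mat refl)
    fix i l
    have "(\<Sum>g\<in>carrier G. F (h \<otimes> g) $$ (i,l)) = (\<Sum>g\<in>carrier G. F g $$ (i,l))"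
    proof (rule sum.reindex_bij_witness[of _ "\<lambda>g. inv h \<otimes> g" "\<lambda>g. h \<otimes> g"])
      fix a assume a: "a \<in> carrier G"
      show "inv h \<otimes> (h \<otimes> a) = a" using a h by (simp add: m_assoc[symmetric])
      show "h \<otimes> a \<in> carrier G" using a h by simp
      show "h \<otimes> (inv h \<otimes> a) = a" using a h by (simp add: m_assoc[symmetric])
      show "inv h \<otimes> a \<in> carrier G" using a h by simp
      show "F (h \<otimes> a) $$ (i,l) = F (h \<otimes> a) $$ (i,l)" by simp
    qed
    then show "(case (i,l) of (i,l) \<Rightarrow> \<Sum>g\<in>carrier G. F (h \<otimes> g) $$ (i,l)) = (case (i,l) of (i,l) \<Rightarrow> \<Sum>g\<in>carrier G. F g $$ (i,l))"
      by simp
  qed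
  also have "\<dots> = avg G \<sigma> X \<rho> * \<rho> h"
    unfolding avg F_def by (rule msum_right[OF rh Mc, symmetric])
  finally show ?thesis .
qed

end


context
  fixes G :: "('g, 'b) monoid_scheme" (structure)
  assumes grp: "group G"
begin

interpretation group G by (rule grp)

lemma avg_entry:
  assumes s: "is_rep G m \<sigma>" and r: "is_rep G n \<rho>" and j: "j < m" and k: "k < n"
    and i: "i < m" and l: "l < n"
  shows "avg G \<sigma> (Emat m n j k) \<rho> $$ (i,l) = (\<Sum>g\<in>carrier G. \<sigma> g $$ (i,j) * \<rho> (inv g) $$ (k,l))"
proof -
  have "avg G \<sigma> (Emat m n j k) \<rho> $$ (i,l) = (\<Sum>g\<in>carrier G. (\<sigma> g * Emat m n j k * \<rho> (inv g)) $$ (i,l))"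
    using i l by (simp add: avg_def Emat_def)
  also have "\<dots> = (\<Sum>g\<in>carrier G. \<sigma> g $$ (i,j) * \<rho> (inv g) $$ (k,l))"
  proof (intro sum.cong refl)
    fix g assume g: "g \<in> carrier G"
    show "(\<sigma> g * Emat m n j k * \<rho> (inv g)) $$ (i,l) = \<sigma> g $$ (i,j) * \<rho> (inv g) $$ (k,l)"
      by (rule triple_entry[OF rep_carrier[OF grp s g] rep_carrier[OF grp r inv_closed[OF g]] j k i l])
  qed
  finally show ?thesis .
qed

lemma char_prod_expand:
  assumes s: "is_rep G m \<sigma>" and r: "is_rep G n \<rho>"
  shows "(\<Sum>g\<in>carrier G. character G \<sigma> g * character G \<rho> (inv g))
       = (\<Sum>j<m. \<Sum>k<n. \<Sum>g\<in>carrier G. \<sigma> g $$ (j,j) * \<rho> (inv g) $$ (k,k))"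
proof -
  have "(\<Sum>g\<in>carrier G. character G \<sigma> g * character G \<rho> (inv g))
      = (\<Sum>g\<in>carrier G. \<Sum>j<m. \<Sum>k<n. \<sigma> g $$ (j,j) * \<rho> (inv g) $$ (k,k))"
  proof (intro sum.cong refl)
    fix g assume g: "g \<in> carrier G"
    have d1: "dim_row (\<sigma> g) = m" using rep_carrier[OF grp s g] by auto
    have d2: "dim_row (\<rho> (inv g)) = n" using rep_carrier[OF grp r inv_closed[OF g]] by auto
    show "character G \<sigma> g * character G \<rho> (inv g) = (\<Sum>j<m. \<Sum>k<n. \<sigma> g $$ (j,j) * \<rho> (inv g) $$ (k,k))"
      using g d1 d2 by (simp add: character_def mtrace_def sum_product)
  qed
  also have "\<dots> = (\<Sum>j<m. \<Sum>g\<in>carrier G. \<Sum>k<n. \<sigma> g $$ (j,j) * \<rho> (inv g) $$ (k,k))"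
    by (rule sum.swap)
  also have "\<dots> = (\<Sum>j<m. \<Sum>k<n. \<Sum>g\<in>carrier G. \<sigma> g $$ (j,j) * \<rho> (inv g) $$ (k,k))"
    by (intro sum.cong refl sum.swap)
  finally show ?thesis .
qed

lemma orth_diff:
  assumes irr1: "irreducible_rep G m \<sigma>" and irr2: "irreducible_rep G n \<rho>"
    and ne: "character G \<sigma> \<noteq> character G \<rho>"
  shows "(\<Sum>g\<in>carrier G. character G \<sigma> g * character G \<rho> (inv g)) = 0"
proof -
  have s: "is_rep G m \<sigma>" using irr1 unfolding irreducible_rep_def by auto
  have r: "is_rep G n \<rho>" using irr2 unfolding irreducible_rep_def by auto
  have zero: "(\<Sum>g\<in>carrier G. \<sigma> g $$ (j,j) * \<rho> (inv g) $$ (k,k)) = 0" if j: "j < m" and k: "k < n" for j k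
  proof -
    let ?T = "avg G \<sigma> (Emat m n j k) \<rho>"
    have T: "?T \<in> carrier_mat m n" by (rule avg_carrier[OF grp]) simp
    have "?T = 0\<^sub>m m n"
    proof (rule ccontr)
      assume nz: "?T \<noteq> 0\<^sub>m m n"
      have "character G \<sigma> = character G \<rho>"
        by (rule schur_inter[OF grp irr2 irr1 T avg_inter[OF grp s r Emat_carrier] nz])
      with ne show False ..
    qed
    then have "?T $$ (j,k) = 0" using j k by simp
    then show ?thesis using avg_entry[OF s r j k j k] by simp
  qed
  show ?thesis unfolding char_prod_expand[OF s r] using zero by simp
qed

lemma orth_same:
  assumes irr: "irreducible_rep G n \<rho>"
  shows "(\<Sum>g\<in>carrier G. character G \<rho> g * character G \<rho> (inv g)) = of_nat (card (carrier G))"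
proof -
  have r: "is_rep G n \<rho>" and n: "n > 0" using irr unfolding irreducible_rep_def by auto
  let ?N = "of_nat (card (carrier G)) :: complex"
  have ent: "(\<Sum>g\<in>carrier G. \<rho> g $$ (j,j) * \<rho> (inv g) $$ (k,k)) = (if j = k then ?N / of_nat n else 0)"
    if j: "j < n" and k: "k < n" for j k
  proof -
    let ?T = "avg G \<rho> (Emat n n j k) \<rho>"
    have T: "?T \<in> carrier_mat n n" by (rule avg_carrier[OF grp]) simp
    have "\<exists>c. ?T = c \<cdot>\<^sub>m 1\<^sub>m n"
      by (rule schur_scalar[OF grp irr T]) (simp add: avg_inter[OF grp r r Emat_carrier])
    then obtain c where c: "?T = c \<cdot>\<^sub>m 1\<^sub>m n" by blast
    have "mtrace ?T = (\<Sum>i<n. \<Sum>g\<in>carrier G. \<rho> g $$ (i,j) * \<rho> (inv g) $$ (k,i))"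
      using T avg_entry[OF r r j k] by (simp add: mtrace_def carrier_matD)
    also have "\<dots> = (\<Sum>g\<in>carrier G. \<Sum>i<n. \<rho> (inv g) $$ (k,i) * \<rho> g $$ (i,j))"
      by (subst sum.swap) (simp add: mult.commute)
    also have "\<dots> = (\<Sum>g\<in>carrier G. (\<rho> (inv g) * \<rho> g) $$ (k,j))"
    proof (intro sum.cong refl)
      fix g assume g: "g \<in> carrier G"
      have c1: "\<rho> g \<in> carrier_mat n n" by (rule rep_carrier[OF grp r g])
      have c2: "\<rho> (inv g) \<in> carrier_mat n n" by (rule rep_carrier[OF grp r inv_closed[OF g]])
      show "(\<Sum>i<n. \<rho> (inv g) $$ (k,i) * \<rho> g $$ (i,j)) = (\<rho> (inv g) * \<rho> g) $$ (k,j)"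
        using c1 c2 j k by (simp add: scalar_prod_def atLeast0LessThan carrier_matD)
    qed
    also have "\<dots> = (\<Sum>g\<in>carrier G. (if k = j then 1 else 0))"
      using rep_inv_l[OF grp r] j k by (intro sum.cong refl) simp
    also have "\<dots> = (if j = k then ?N else 0)" by auto
    finally have tr: "mtrace ?T = (if j = k then ?N else 0)" .
    have "mtrace ?T = c * of_nat n" unfolding c by (simp add: mtrace_def)
    with tr have cn: "c * of_nat n = (if j = k then ?N else 0)" by simp
    have "?T $$ (j,k) = (if j = k then c else 0)" unfolding c using j k by simp
    also have "\<dots> = (if j = k then ?N / of_nat n else 0)" using cn n
      by (auto simp: field_simps)
    finally show ?thesis using avg_entry[OF r r j k j k] by simp
  qed
  have "(\<Sum>g\<in>carrier G. character G \<rho> g * character G \<rho> (inv g))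
      = (\<Sum>j<n. \<Sum>k<n. (if j = k then ?N / of_nat n else 0))"
    unfolding char_prod_expand[OF r r] using ent by simp
  also have "\<dots> = (\<Sum>j<n. ?N / of_nat n)" by simp
  also have "\<dots> = ?N" using n by simp
  finally show ?thesis .
qed

end


context
  fixes G :: "('g, 'b) monoid_scheme" (structure)
  assumes grp: "group G"
begin

interpretation group G by (rule grp)

lemma Irr_orth:
  assumes chi: "\<chi> \<in> Irr G" and psi: "\<psi> \<in> Irr G"
  shows "(\<Sum>g\<in>carrier G. \<chi> g * \<psi> (inv g)) = (if \<chi> = \<psi> then of_nat (card (carrier G)) else 0)"
proof -
  obtain m \<sigma> where s: "irreducible_rep G m \<sigma>" and c1: "\<chi> = character G \<sigma>" using chi unfolding Irr_def by auto
  obtain n \<rho> where r: "irreducible_rep G n \<rho>" and c2: "\<psi> = character G \<rho>" using psi unfolding Irr_def by auto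
  show ?thesis
  proof (cases "\<chi> = \<psi>")
    case True
    then show ?thesis using orth_same[OF grp r] c1 c2 by simp
  next
    case False
    then show ?thesis using orth_diff[OF grp s r] c1 c2 by simp
  qed
qed

lemma Irr_card_bound:
  assumes fin: "finite (carrier G)" and S: "S \<subseteq> Irr G" and finS: "finite S"
  shows "card S \<le> card (carrier G)"
proof (rule ccontr)
  assume "\<not> card S \<le> card (carrier G)"
  define N where "N = card S"
  define M where "M = card (carrier G)"
  have MN: "M < N" using \<open>\<not> card S \<le> card (carrier G)\<close> N_def M_def by simp
  obtain f where f: "bij_betw f {0..<N} S" using ex_bij_betw_nat_finite[OF finS] N_def by auto
  obtain e where e: "bij_betw e {0..<M} (carrier G)" using ex_bij_betw_nat_finite[OF fin] M_def by auto
  have M0: "M > 0" using fin M_def one_closed by (auto simp: card_gt_0_iff)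
  define A where "A = mat N N (\<lambda>(a,b). if b < M then f a (e b) else (0::complex))"
  define B where "B = mat N N (\<lambda>(b,c). if b < M then f c (inv (e b)) / of_nat M else (0::complex))"
  have A: "A \<in> carrier_mat N N" and B: "B \<in> carrier_mat N N" unfolding A_def B_def by auto
  have AB: "A * B = 1\<^sub>m N"
  proof (rule eq_matI)
    fix a c assume a: "a < dim_row (1\<^sub>m N)" and c: "c < dim_col (1\<^sub>m N)"
    then have a: "a < N" and c: "c < N" by auto
    have fa: "f a \<in> Irr G" and fc: "f c \<in> Irr G" using bij_betwE[OF f] S a c by auto
    have "(A * B) $$ (a,c) = (\<Sum>b\<in>{0..<N}. A $$ (a,b) * B $$ (b,c))"
      using A B a c by (simp add: scalar_prod_def)
    also have "\<dots> = (\<Sum>b\<in>{0..<N}. if b < M then f a (e b) * f c (inv (e b)) / of_nat M else 0)"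
      using a c by (intro sum.cong refl) (auto simp: A_def B_def)
    also have "\<dots> = (\<Sum>b\<in>{0..<M}. f a (e b) * f c (inv (e b)) / of_nat M)"
    proof -
      have "{0..<N} = {0..<M} \<union> {M..<N}" using MN by auto
      then show ?thesis by (simp add: sum.union_disjoint)
    qed
    also have "\<dots> = (\<Sum>g\<in>carrier G. f a g * f c (inv g) / of_nat M)"
      by (rule sum.reindex_bij_betw[OF e])
    also have "\<dots> = (\<Sum>g\<in>carrier G. f a g * f c (inv g)) / of_nat M"
      by (simp add: sum_divide_distrib)
    also have "\<dots> = (if f a = f c then 1 else 0)"
      using Irr_orth[OF fa fc] M_def M0 by simp
    also have "\<dots> = 1\<^sub>m N $$ (a,c)"
      using f a c by (auto simp: bij_betw_def inj_on_def)
    finally show "(A * B) $$ (a,c) = 1\<^sub>m N $$ (a,c)" .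
  qed (use A B in auto)
  have BA: "B * A = 1\<^sub>m N" by (rule mat_mult_left_right_inverse[OF A B AB])
  have "(B * A) $$ (M,M) = (\<Sum>b\<in>{0..<N}. B $$ (M,b) * A $$ (b,M))"
    using A B MN by (simp add: scalar_prod_def)
  also have "\<dots> = 0" using MN by (intro sum.neutral) (auto simp: A_def B_def)
  finally show False using BA MN by simp
qed

lemma Irr_finite:
  assumes fin: "finite (carrier G)"
  shows "finite (Irr G)"
  using finite_if_finite_subsets_card_bdd[of "Irr G" "card (carrier G)"] Irr_card_bound[OF fin] by blast

lemma one_dim_irr:
  assumes hom: "\<And>x y. x \<in> carrier G \<Longrightarrow> y \<in> carrier G \<Longrightarrow> \<psi> (x \<otimes> y) = \<psi> x * \<psi> y"
    and one: "\<psi> \<one> = 1"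
  shows "irreducible_rep G 1 (\<lambda>x. mat 1 1 (\<lambda>_. \<psi> x))"
    and "character G (\<lambda>x. mat 1 1 (\<lambda>_. \<psi> x)) = (\<lambda>x\<in>carrier G. \<psi> x)"
proof -
  show "irreducible_rep G 1 (\<lambda>x. mat 1 1 (\<lambda>_. \<psi> x))"
    unfolding irreducible_rep_def
  proof (intro conjI allI impI)
    show "is_rep G 1 (\<lambda>x. mat 1 1 (\<lambda>_. \<psi> x))"
      unfolding is_rep_def
    proof (intro conjI ballI)
      show "mat 1 1 (\<lambda>_. \<psi> \<one>) = 1\<^sub>m 1" using one by (intro eq_matI) auto
      fix x y assume x: "x \<in> carrier G" and y: "y \<in> carrier G"
      show "mat 1 1 (\<lambda>_. \<psi> (x \<otimes> y)) = mat 1 1 (\<lambda>_. \<psi> x) * mat 1 1 (\<lambda>_. \<psi> y)"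
        using hom[OF x y] by (intro eq_matI) (auto simp: scalar_prod_def)
    qed auto
    fix W assume W: "is_subspace 1 W \<and> (\<forall>x\<in>carrier G. \<forall>w\<in>W. mat 1 1 (\<lambda>_. \<psi> x) *\<^sub>v w \<in> W)"
    show "W = {0\<^sub>v 1} \<or> W = carrier_vec 1"
    proof (cases "W = {0\<^sub>v 1}")
      case False
      have sub: "W \<subseteq> carrier_vec 1" "0\<^sub>v 1 \<in> W" "\<And>c v. v \<in> W \<Longrightarrow> c \<cdot>\<^sub>v v \<in> W"
        using W unfolding is_subspace_def by auto
      then obtain v where v: "v \<in> W" "v \<noteq> 0\<^sub>v 1" using False by blast
      have vc: "v \<in> carrier_vec 1" using v sub by auto
      have v0: "v $ 0 \<noteq> 0"
      proof
        assume "v $ 0 = 0"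
        then have "v = 0\<^sub>v 1" using vc by (intro eq_vecI) auto
        with v show False by simp
      qed
      have "carrier_vec 1 \<subseteq> W"
      proof
        fix w :: "complex vec" assume w: "w \<in> carrier_vec 1"
        have "w = (w $ 0 / v $ 0) \<cdot>\<^sub>v v" using w vc v0 by (intro eq_vecI) auto
        then show "w \<in> W" using sub(3)[OF v(1)] by metis
      qed
      then show ?thesis using sub by auto
    qed simp
  qed simp
  show "character G (\<lambda>x. mat 1 1 (\<lambda>_. \<psi> x)) = (\<lambda>x\<in>carrier G. \<psi> x)"
    unfolding character_def by (simp add: mtrace_def)
qed

definition triv_char where "triv_char = (\<lambda>x\<in>carrier G. (1::complex))"

lemma triv_in_Irr: "triv_char \<in> Irr G"
proof -
  have "irreducible_rep G 1 (\<lambda>x. mat 1 1 (\<lambda>_. (\<lambda>_. 1::complex) x))"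
    by (rule one_dim_irr(1)) auto
  moreover have "character G (\<lambda>x. mat 1 1 (\<lambda>_. (\<lambda>_. 1::complex) x)) = triv_char"
    unfolding triv_char_def by (rule one_dim_irr(2)) auto
  ultimately show ?thesis unfolding Irr_def mem_Collect_eq
    by (intro exI[of _ 1] exI[of _ "\<lambda>x. mat 1 1 (\<lambda>_. 1::complex)"]) simp
qed

lemma triv_char_one: "triv_char \<one> = 1"
  by (simp add: triv_char_def)

lemma Irr_class_fun:
  assumes chi: "\<chi> \<in> Irr G" and g: "g \<in> carrier G" and h: "h \<in> carrier G"
  shows "\<chi> (h \<otimes> g \<otimes> inv h) = \<chi> g"
  using chi character_conj[OF grp _ g h] unfolding Irr_def irreducible_rep_def by auto

lemma class_val_conj:
  assumes chi: "\<chi> \<in> Irr G" and g: "g \<in> carrier G"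
  shows "class_val \<chi> (conj_class G g) = \<chi> g"
proof -
  have "g \<in> conj_class G g" unfolding conj_class_def using g
    by (auto intro!: exI[of _ \<one>])
  then have "(SOME x. x \<in> conj_class G g) \<in> conj_class G g" by (rule someI)
  then obtain h where h: "h \<in> carrier G" "(SOME x. x \<in> conj_class G g) = h \<otimes> g \<otimes> inv h"
    unfolding conj_class_def by auto
  then show ?thesis unfolding class_val_def using Irr_class_fun[OF chi g h(1)] by simp
qed

lemma conj_class_one: "conj_class G \<one> = {\<one>}"
  unfolding conj_class_def by (auto intro!: exI[of _ "\<one>"])

lemma mem_conj_class: "g \<in> carrier G \<Longrightarrow> g \<in> conj_class G g"
  unfolding conj_class_def by (auto intro!: exI[of _ \<one>])

lemma conj_class_subset: "g \<in> carrier G \<Longrightarrow> conj_class G g \<subseteq> carrier G"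
  unfolding conj_class_def by auto

lemma Gamma_conj:
  assumes g: "g \<in> carrier G"
  shows "Gamma G (conj_class G g) = (\<Sum>\<chi>\<in>Irr G. \<chi> g)"
  unfolding Gamma_def using class_val_conj[OF _ g] by (intro sum.cong refl) auto

lemma Gamma_one: "Gamma G {\<one>} = Gamma_e G"
  using Gamma_conj[of \<one>] conj_class_one by (simp add: Gamma_e_def)

lemma s_table_Gamma: "finite (carrier G) \<Longrightarrow> s_table G = (\<Sum>C\<in>Conj G. Gamma G C)"
  unfolding s_table_def Gamma_def by (rule sum.swap)

lemma one_in_Conj: "{\<one>} \<in> Conj G"
  unfolding Conj_def using conj_class_one by force

lemma s_table_split:
  assumes fin: "finite (carrier G)"
  shows "s_table G = Gamma_e G + (\<Sum>C\<in>Conj G - {{\<one>}}. Gamma G C)"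
proof -
  have fC: "finite (Conj G)" unfolding Conj_def using fin by simp
  show ?thesis unfolding s_table_Gamma[OF fin] Gamma_one[symmetric]
    using sum.remove[OF fC one_in_Conj, of "Gamma G"] by simp
qed

end


context
  fixes G :: "('g, 'b) monoid_scheme" (structure)
  assumes grp: "group G"
begin

interpretation group G by (rule grp)

lemma Gamma_nat_sum:
  assumes fin: "finite (carrier G)" and hyp: "\<forall>C\<in>Conj G. \<exists>k::nat. Gamma G C = of_nat k"
  obtains k :: "'g set \<Rightarrow> nat" where "\<And>C. C \<in> Conj G \<Longrightarrow> Gamma G C = of_nat (k C)"
    and "s_table G = Gamma_e G + of_nat (\<Sum>C\<in>Conj G - {{\<one>}}. k C)"
proof -
  from hyp obtain k :: "'g set \<Rightarrow> nat" where k: "\<And>C. C \<in> Conj G \<Longrightarrow> Gamma G C = of_nat (k C)"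
    by metis
  have "s_table G = Gamma_e G + (\<Sum>C\<in>Conj G - {{\<one>}}. Gamma G C)" by (rule s_table_split[OF grp fin])
  also have "(\<Sum>C\<in>Conj G - {{\<one>}}. Gamma G C) = (\<Sum>C\<in>Conj G - {{\<one>}}. of_nat (k C))"
    using k by (intro sum.cong) auto
  also have "\<dots> = of_nat (\<Sum>C\<in>Conj G - {{\<one>}}. k C)" by simp
  finally show ?thesis using that k by blast
qed

lemma part1:
  assumes fin: "finite (carrier G)" and hyp: "\<forall>C\<in>Conj G. \<exists>k::nat. Gamma G C = of_nat k"
  shows "Gamma_e G \<le> s_table G"
proof -
  obtain k :: "'g set \<Rightarrow> nat" where "s_table G = Gamma_e G + of_nat (\<Sum>C\<in>Conj G - {{\<one>}}. k C)"
    using Gamma_nat_sum[OF fin hyp] by blast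
  then show ?thesis by (simp add: less_eq_complex_def sum_nonneg)
qed

lemma col_zero:
  assumes fin: "finite (carrier G)" and hyp: "\<forall>C\<in>Conj G. \<exists>k::nat. Gamma G C = of_nat k"
    and eq: "s_table G = Gamma_e G" and g: "g \<in> carrier G" and g1: "g \<noteq> \<one>"
  shows "(\<Sum>\<chi>\<in>Irr G. \<chi> g) = 0"
proof -
  obtain k :: "'g set \<Rightarrow> nat" where k: "\<And>C. C \<in> Conj G \<Longrightarrow> Gamma G C = of_nat (k C)"
    and s: "s_table G = Gamma_e G + of_nat (\<Sum>C\<in>Conj G - {{\<one>}}. k C)"
    using Gamma_nat_sum[OF fin hyp] by blast
  have fC: "finite (Conj G)" unfolding Conj_def using fin by simp
  from s eq have "complex_of_nat (\<Sum>C\<in>Conj G - {{\<one>}}. k C) = 0" by (simp del: of_nat_sum)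
  then have "(\<Sum>C\<in>Conj G - {{\<one>}}. k C) = 0" by (simp only: of_nat_eq_0_iff)
  then have z: "\<And>C. C \<in> Conj G - {{\<one>}} \<Longrightarrow> k C = 0" using fC by simp
  have cg: "conj_class G g \<in> Conj G - {{\<one>}}"
    using g g1 mem_conj_class[OF grp g] unfolding Conj_def by auto
  have "(\<Sum>\<chi>\<in>Irr G. \<chi> g) = Gamma G (conj_class G g)" using Gamma_conj[OF grp g] by simp
  also have "\<dots> = 0" using k[of "conj_class G g"] z[OF cg] cg by simp
  finally show ?thesis .
qed

lemma dirB:
  assumes fin: "finite (carrier G)" and hyp: "\<forall>C\<in>Conj G. \<exists>k::nat. Gamma G C = of_nat k"
    and eq: "s_table G = Gamma_e G"
  shows "comm_group G"
proof -
  let ?N = "of_nat (card (carrier G)) :: complex"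
  have fI: "finite (Irr G)" by (rule Irr_finite[OF grp fin])
  have col0: "\<And>g. g \<in> carrier G \<Longrightarrow> g \<noteq> \<one> \<Longrightarrow> (\<Sum>\<chi>\<in>Irr G. \<chi> g) = 0"
    using col_zero[OF fin hyp eq] by blast
  have key: "Gamma_e G * \<psi> \<one> = ?N" if psi: "\<psi> \<in> Irr G" for \<psi>
  proof -
    have "(\<Sum>g\<in>carrier G. (\<Sum>\<chi>\<in>Irr G. \<chi> g) * \<psi> (inv g)) = (\<Sum>\<chi>\<in>Irr G. \<Sum>g\<in>carrier G. \<chi> g * \<psi> (inv g))"
      by (simp add: sum_distrib_right sum.swap[of _ "carrier G"])
    also have "\<dots> = (\<Sum>\<chi>\<in>Irr G. if \<chi> = \<psi> then ?N else 0)"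
      using Irr_orth[OF grp _ psi] by (intro sum.cong refl) auto
    also have "\<dots> = ?N" using fI psi by simp
    finally have 1: "(\<Sum>g\<in>carrier G. (\<Sum>\<chi>\<in>Irr G. \<chi> g) * \<psi> (inv g)) = ?N" .
    have "(\<Sum>g\<in>carrier G. (\<Sum>\<chi>\<in>Irr G. \<chi> g) * \<psi> (inv g)) = (\<Sum>g\<in>carrier G. if g = \<one> then Gamma_e G * \<psi> \<one> else 0)"
      using col0 by (intro sum.cong refl) (auto simp: Gamma_e_def)
    also have "\<dots> = Gamma_e G * \<psi> \<one>" using fin by simp
    finally show ?thesis using 1 by simp
  qed
  have N0: "?N \<noteq> 0" using fin one_closed by (auto simp: card_gt_0_iff)
  have GN: "Gamma_e G = ?N" using key[OF triv_in_Irr[OF grp]] triv_char_one[OF grp] by simp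
  have one1: "\<psi> \<one> = 1" if "\<psi> \<in> Irr G" for \<psi> using key[OF that] GN N0 by simp
  have mult: "\<chi> (x \<otimes> y) = \<chi> x * \<chi> y" if chi: "\<chi> \<in> Irr G" and x: "x \<in> carrier G" and y: "y \<in> carrier G" for \<chi> x y
  proof -
    obtain n \<rho> where irr: "irreducible_rep G n \<rho>" and c: "\<chi> = character G \<rho>" using chi unfolding Irr_def by auto
    have r: "is_rep G n \<rho>" using irr unfolding irreducible_rep_def by auto
    have "of_nat n = (1::complex)" using one1[OF chi] c character_one[OF grp r] by simp
    then have n1: "n = 1" by simp
    have cx: "\<rho> x \<in> carrier_mat 1 1" and cy: "\<rho> y \<in> carrier_mat 1 1" using rep_carrier[OF grp r] x y n1 by auto
    show ?thesis using c x y cx cy by (simp add: character_def mtrace_def rep_mult[OF grp r] scalar_prod_def carrier_matD)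
  qed
  show ?thesis
  proof (rule group_comm_groupI)
    fix x y assume x: "x \<in> carrier G" and y: "y \<in> carrier G"
    define k where "k = x \<otimes> y \<otimes> inv (y \<otimes> x)"
    have kc: "k \<in> carrier G" using x y k_def by simp
    have chik: "\<chi> k = 1" if chi: "\<chi> \<in> Irr G" for \<chi>
    proof -
      have "\<chi> (x \<otimes> y) = \<chi> (y \<otimes> x)" using mult[OF chi x y] mult[OF chi y x] by simp
      then have "\<chi> k = \<chi> (y \<otimes> x) * \<chi> (inv (y \<otimes> x))" using mult[OF chi, of "x \<otimes> y" "inv (y \<otimes> x)"] x y k_def by simp
      also have "\<dots> = \<chi> (y \<otimes> x \<otimes> inv (y \<otimes> x))" using mult[OF chi, of "y \<otimes> x" "inv (y \<otimes> x)"] x y by simp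
      also have "\<dots> = 1" using one1[OF chi] x y by simp
      finally show ?thesis .
    qed
    have "(\<Sum>\<chi>\<in>Irr G. \<chi> k) = (\<Sum>\<chi>\<in>Irr G. 1)" using chik by (intro sum.cong) auto
    then have "(\<Sum>\<chi>\<in>Irr G. \<chi> k) = of_nat (card (Irr G))" by simp
    moreover have "card (Irr G) \<noteq> 0" using fI triv_in_Irr[OF grp] by auto
    ultimately have "k = \<one>" using col0[OF kc] by auto
    then have "x \<otimes> y = \<one> \<otimes> (y \<otimes> x)" unfolding k_def using x y
      by (metis inv_closed l_inv m_assoc m_closed r_one)
    then show "x \<otimes> y = y \<otimes> x" using x y by simp
  qed
qed

end


definition ischar :: "('g, 'b) monoid_scheme \<Rightarrow> 'g set \<Rightarrow> ('g \<Rightarrow> complex) \<Rightarrow> bool" where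
  "ischar G H \<chi> \<longleftrightarrow> \<chi> \<one>\<^bsub>G\<^esub> = 1 \<and> (\<forall>a\<in>H. \<forall>b\<in>H. \<chi> (a \<otimes>\<^bsub>G\<^esub> b) = \<chi> a * \<chi> b)"

lemma complex_root_ex: "0 < k \<Longrightarrow> \<exists>c::complex. c ^ k = z"
proof (cases "z = 0")
  case True
  assume "0 < k" then show ?thesis using True by (intro exI[of _ 0]) simp
next
  case False
  assume k: "0 < k"
  have "card {c. c ^ k = z} = k" by (rule card_nth_roots[OF False k])
  have "{c. c ^ k = z} \<noteq> {}"
  proof
    assume "{c. c ^ k = z} = {}"
    then have "card {c. c ^ k = z} = 0" by simp
    with \<open>card {c. c ^ k = z} = k\<close> k show False by simp
  qed
  then show ?thesis by blast
qed

lemma complex_root_unity_ne1: "1 < k \<Longrightarrow> \<exists>c::complex. c ^ k = 1 \<and> c \<noteq> 1"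
proof -
  assume k: "1 < k"
  have "card {c::complex. c ^ k = 1} = k" by (rule card_roots_unity_eq) (use k in simp)
  have "\<not> {c::complex. c ^ k = 1} \<subseteq> {1}"
  proof
    assume "{c::complex. c ^ k = 1} \<subseteq> {1}"
    then have "card {c::complex. c ^ k = 1} \<le> card {1::complex}" by (intro card_mono) auto
    with \<open>card {c::complex. c ^ k = 1} = k\<close> k show False by simp
  qed
  then show ?thesis by auto
qed

context
  fixes G :: "('g, 'b) monoid_scheme" (structure)
  assumes cgrp: "comm_group G" and fin: "finite (carrier G)"
begin

interpretation comm_group G by (rule cgrp)

lemma grp: "group G" by (rule is_group)

lemma subgroup_pow: "subgroup H G \<Longrightarrow> h \<in> H \<Longrightarrow> h [^] (n::nat) \<in> H"
  by (induction n) (auto simp: subgroup.one_closed subgroup.m_closed)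

lemma ischar_pow: "ischar G H \<chi> \<Longrightarrow> subgroup H G \<Longrightarrow> h \<in> H \<Longrightarrow> \<chi> (h [^] (n::nat)) = \<chi> h ^ n"
proof (induction n)
  case 0 then show ?case by (simp add: ischar_def)
next
  case (Suc n)
  have "h [^] n \<in> H" using subgroup_pow Suc by blast
  then show ?case using Suc by (simp add: ischar_def)
qed

lemma order_pos: "0 < order G"
  using fin one_closed unfolding order_def by (auto simp: card_gt_0_iff)

definition ext_set :: "'g set \<Rightarrow> 'g \<Rightarrow> 'g set" where
  "ext_set H y = {h \<otimes> y [^] (j::nat) | h j. h \<in> H}"

lemma ext_set_subgroup:
  assumes H: "subgroup H G" and y: "y \<in> carrier G"
  shows "subgroup (ext_set H y) G"
proof (rule subgroupI)
  have Hc: "H \<subseteq> carrier G" using H subgroup.subset by blast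
  show "ext_set H y \<subseteq> carrier G" unfolding ext_set_def using Hc y by auto
  show "ext_set H y \<noteq> {}" unfolding ext_set_def using subgroup.one_closed[OF H] by blast
next
  have Hc: "H \<subseteq> carrier G" using H subgroup.subset by blast
  fix a assume "a \<in> ext_set H y"
  then obtain h j where h: "h \<in> H" and a: "a = h \<otimes> y [^] (j::nat)" unfolding ext_set_def by auto
  have hc: "h \<in> carrier G" using h Hc by auto
  define N where "N = order G"
  have iy: "inv y = y [^] (N - 1)"
  proof (rule inv_equality)
    have "y [^] (N - 1) \<otimes> y = y [^] (Suc (N - 1))" by simp
    also have "Suc (N - 1) = N" using order_pos N_def by simp
    also have "y [^] N = \<one>" using pow_order_eq_1[OF y] N_def by simp
    finally show "y [^] (N - 1) \<otimes> y = \<one>" .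
  qed (use y in auto)
  have "inv a = inv h \<otimes> inv (y [^] j)" using a hc y by (simp add: inv_mult_group m_comm)
  also have "inv (y [^] j) = (inv y) [^] j" using nat_pow_inv[OF y] by simp
  also have "\<dots> = y [^] ((N - 1) * j)" using iy y by (simp add: nat_pow_pow)
  finally show "inv a \<in> ext_set H y" unfolding ext_set_def using subgroup.m_inv_closed[OF H h] by blast
next
  have Hc: "H \<subseteq> carrier G" using H subgroup.subset by blast
  fix a b assume "a \<in> ext_set H y" "b \<in> ext_set H y"
  then obtain h1 j1 h2 j2 where h1: "h1 \<in> H" and a: "a = h1 \<otimes> y [^] (j1::nat)"
    and h2: "h2 \<in> H" and b: "b = h2 \<otimes> y [^] (j2::nat)" unfolding ext_set_def by auto
  have "h1 \<in> carrier G" "h2 \<in> carrier G" using h1 h2 Hc by auto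
  then have "a \<otimes> b = (h1 \<otimes> h2) \<otimes> y [^] (j1 + j2)"
    using a b y by (simp add: nat_pow_mult[symmetric] m_ac)
  then show "a \<otimes> b \<in> ext_set H y" unfolding ext_set_def using subgroup.m_closed[OF H h1 h2] by blast
qed

lemma ext_step:
  assumes H: "subgroup H G" and chi: "ischar G H \<chi>" and y: "y \<in> carrier G"
    and kdef: "k = (LEAST k::nat. 0 < k \<and> y [^] k \<in> H)" and c: "c ^ k = \<chi> (y [^] k)"
  shows "\<exists>\<chi>'. ischar G (ext_set H y) \<chi>' \<and> (\<forall>h\<in>H. \<chi>' h = \<chi> h) \<and> \<chi>' y = c"
proof -
  have Hc: "H \<subseteq> carrier G" using H subgroup.subset by blast
  have ex: "\<exists>k::nat. 0 < k \<and> y [^] k \<in> H"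
    using order_pos pow_order_eq_1[OF y] subgroup.one_closed[OF H] by (intro exI[of _ "order G"]) auto
  have kpos: "0 < k" and yk: "y [^] k \<in> H" using LeastI_ex[OF ex] kdef by auto
  have kmin: "\<And>r::nat. 0 < r \<Longrightarrow> r < k \<Longrightarrow> y [^] r \<notin> H" using not_less_Least kdef by blast
  have kdvd: "k dvd d" if d: "y [^] d \<in> H" for d :: nat
  proof -
    have "y [^] d = y [^] (k * (d div k)) \<otimes> y [^] (d mod k)"
      using y by (simp add: nat_pow_mult)
    also have "y [^] (k * (d div k)) = (y [^] k) [^] (d div k)" using y by (simp add: nat_pow_pow)
    finally have e: "y [^] d = (y [^] k) [^] (d div k) \<otimes> y [^] (d mod k)" .
    have p: "(y [^] k) [^] (d div k) \<in> H" using subgroup_pow[OF H yk] .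
    have "y [^] (d mod k) = inv ((y [^] k) [^] (d div k)) \<otimes> y [^] d"
      using e y p Hc by (simp add: m_assoc[symmetric])
    then have "y [^] (d mod k) \<in> H"
      using subgroup.m_closed[OF H subgroup.m_inv_closed[OF H p] d] by simp
    then have "d mod k = 0" using kmin[of "d mod k"] kpos by (meson mod_less_divisor not_gr_zero)
    then show ?thesis by auto
  qed
  have wd1: "\<chi> h1 * c ^ j1 = \<chi> h2 * c ^ j2"
    if h1: "h1 \<in> H" and h2: "h2 \<in> H" and e: "h1 \<otimes> y [^] j1 = h2 \<otimes> y [^] j2" and le: "j2 \<le> j1"
    for h1 h2 and j1 j2 :: nat
  proof -
    define d where "d = j1 - j2"
    have j1: "j1 = j2 + d" using le d_def by simp
    have h1c: "h1 \<in> carrier G" and h2c: "h2 \<in> carrier G" using h1 h2 Hc by auto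
    have "(h1 \<otimes> y [^] d) \<otimes> y [^] j2 = h2 \<otimes> y [^] j2"
      using e j1 h1c y by (simp add: nat_pow_mult[symmetric] m_ac)
    then have e2: "h1 \<otimes> y [^] d = h2" using right_cancel h1c h2c y by simp
    then have "inv h1 \<otimes> h2 = inv h1 \<otimes> (h1 \<otimes> y [^] d)" by simp
    also have "\<dots> = y [^] d" using h1c y by (simp add: m_assoc[symmetric])
    finally have "y [^] d = inv h1 \<otimes> h2" by simp
    then have "y [^] d \<in> H" using subgroup.m_closed[OF H subgroup.m_inv_closed[OF H h1] h2] by simp
    then obtain q where q: "d = k * q" using kdvd by blast
    have "y [^] d = (y [^] k) [^] q" using q y by (simp add: nat_pow_pow)
    then have "\<chi> h2 = \<chi> h1 * \<chi> ((y [^] k) [^] q)"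
      using e2 chi h1 subgroup_pow[OF H yk] unfolding ischar_def by metis
    also have "\<chi> ((y [^] k) [^] q) = c ^ (k * q)"
      using ischar_pow[OF chi H yk] c by (simp add: power_mult)
    finally have "\<chi> h2 * c ^ j2 = \<chi> h1 * (c ^ (k * q) * c ^ j2)" by (simp add: ac_simps)
    also have "\<dots> = \<chi> h1 * c ^ j1" using j1 q by (simp add: power_add ac_simps)
    finally show ?thesis by simp
  qed
  have wd: "\<chi> h1 * c ^ j1 = \<chi> h2 * c ^ j2"
    if h1: "h1 \<in> H" and h2: "h2 \<in> H" and e: "h1 \<otimes> y [^] j1 = h2 \<otimes> y [^] j2"
    for h1 h2 and j1 j2 :: nat
  proof (cases "j2 \<le> j1")
    case True then show ?thesis using wd1[OF h1 h2 e] by simp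
  next
    case False then show ?thesis using wd1[OF h2 h1 e[symmetric]] by simp
  qed
  define \<chi>' where "\<chi>' = (\<lambda>z. SOME v. \<exists>h j. h \<in> H \<and> z = h \<otimes> y [^] (j::nat) \<and> v = \<chi> h * c ^ j)"
  have val: "\<chi>' (h \<otimes> y [^] j) = \<chi> h * c ^ j" if h: "h \<in> H" for h and j :: nat
  proof -
    let ?P = "\<lambda>v. \<exists>h' j'. h' \<in> H \<and> h \<otimes> y [^] j = h' \<otimes> y [^] (j'::nat) \<and> v = \<chi> h' * c ^ j'"
    have "\<exists>v. ?P v" using h by blast
    then have "?P (\<chi>' (h \<otimes> y [^] j))" unfolding \<chi>'_def by (rule someI_ex)
    then obtain h' j' where h': "h' \<in> H" and e: "h \<otimes> y [^] j = h' \<otimes> y [^] (j'::nat)"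
      and v: "\<chi>' (h \<otimes> y [^] j) = \<chi> h' * c ^ j'" by blast
    then show ?thesis using wd[OF h h' e] by simp
  qed
  have ext: "\<chi>' h = \<chi> h" if h: "h \<in> H" for h
    using val[OF h, of 0] h Hc by auto
  have c1: "\<chi>' y = c"
    using val[OF subgroup.one_closed[OF H], of 1] y chi by (simp add: ischar_def)
  have ic: "ischar G (ext_set H y) \<chi>'"
    unfolding ischar_def
  proof (intro conjI ballI)
    show "\<chi>' \<one> = 1" using ext[OF subgroup.one_closed[OF H]] chi by (simp add: ischar_def)
    fix a b assume "a \<in> ext_set H y" "b \<in> ext_set H y"
    then obtain h1 j1 h2 j2 where h1: "h1 \<in> H" and a: "a = h1 \<otimes> y [^] (j1::nat)"
      and h2: "h2 \<in> H" and b: "b = h2 \<otimes> y [^] (j2::nat)" unfolding ext_set_def by auto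
    have "h1 \<in> carrier G" "h2 \<in> carrier G" using h1 h2 Hc by auto
    then have ab: "a \<otimes> b = (h1 \<otimes> h2) \<otimes> y [^] (j1 + j2)"
      using a b y by (simp add: nat_pow_mult[symmetric] m_ac)
    have "\<chi>' (a \<otimes> b) = \<chi> (h1 \<otimes> h2) * c ^ (j1 + j2)"
      unfolding ab by (rule val[OF subgroup.m_closed[OF H h1 h2]])
    also have "\<dots> = (\<chi> h1 * c ^ j1) * (\<chi> h2 * c ^ j2)"
      using chi h1 h2 unfolding ischar_def by (simp add: power_add ac_simps)
    also have "\<dots> = \<chi>' a * \<chi>' b" using val[OF h1] val[OF h2] a b by simp
    finally show "\<chi>' (a \<otimes> b) = \<chi>' a * \<chi>' b" .
  qed
  show ?thesis using ic ext c1 by blast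
qed

end


lemma char1_mult:
  assumes grp: "group G" and r: "is_rep G 1 \<rho>" and x: "x \<in> carrier G" and y: "y \<in> carrier G"
  shows "character G \<rho> (x \<otimes>\<^bsub>G\<^esub> y) = character G \<rho> x * character G \<rho> y"
proof -
  have cx: "\<rho> x \<in> carrier_mat 1 1" and cy: "\<rho> y \<in> carrier_mat 1 1" using rep_carrier[OF grp r] x y by auto
  have xy: "x \<otimes>\<^bsub>G\<^esub> y \<in> carrier G" using grp x y by (simp add: group.is_monoid monoid.m_closed)
  show ?thesis using x y xy cx cy by (simp add: character_def mtrace_def rep_mult[OF grp r] scalar_prod_def carrier_matD)
qed

context
  fixes G :: "('g, 'b) monoid_scheme" (structure)
  assumes cgrp: "comm_group G" and fin: "finite (carrier G)"
begin

interpretation comm_group G by (rule cgrp)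

lemma least_ex:
  assumes H: "subgroup H G" and y: "y \<in> carrier G"
  shows "0 < (LEAST k::nat. 0 < k \<and> y [^] k \<in> H) \<and> y [^] (LEAST k::nat. 0 < k \<and> y [^] k \<in> H) \<in> H"
proof -
  have ex: "\<exists>k::nat. 0 < k \<and> y [^] k \<in> H"
    using order_pos[OF cgrp fin] pow_order_eq_1[OF y] subgroup.one_closed[OF H] by (intro exI[of _ "order G"]) auto
  show ?thesis using LeastI_ex[OF ex] by blast
qed

lemma ext_full:
  "subgroup H G \<Longrightarrow> ischar G H \<chi> \<Longrightarrow> \<exists>\<psi>. ischar G (carrier G) \<psi> \<and> (\<forall>h\<in>H. \<psi> h = \<chi> h)"
proof (induction "card (carrier G - H)" arbitrary: H \<chi> rule: less_induct)
  case less
  have Hc: "H \<subseteq> carrier G" using less.prems(1) subgroup.subset by blast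
  show ?case
  proof (cases "H = carrier G")
    case True then show ?thesis using less.prems by blast
  next
    case False
    then obtain y where y: "y \<in> carrier G" "y \<notin> H" using Hc by blast
    define k where "k = (LEAST k::nat. 0 < k \<and> y [^] k \<in> H)"
    have kpos: "0 < k" using least_ex[OF less.prems(1) y(1)] k_def by simp
    obtain c where c: "c ^ k = \<chi> (y [^] k)" using complex_root_ex[OF kpos] by blast
    obtain \<chi>' where ch: "ischar G (ext_set G H y) \<chi>'" and ext: "\<forall>h\<in>H. \<chi>' h = \<chi> h"
      using ext_step[OF cgrp fin less.prems(1) less.prems(2) y(1) k_def c] by blast
    have sub: "subgroup (ext_set G H y) G" by (rule ext_set_subgroup[OF cgrp fin less.prems(1) y(1)])
    have HH: "H \<subseteq> ext_set G H y"
    proof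
      fix h assume h: "h \<in> H"
      have "h = h \<otimes> y [^] (0::nat)" using Hc h by auto
      then show "h \<in> ext_set G H y" unfolding ext_set_def[OF cgrp fin] using h by blast
    qed
    have yH: "y \<in> ext_set G H y" unfolding ext_set_def[OF cgrp fin] using y(1) subgroup.one_closed[OF less.prems(1)]
      by (intro CollectI exI[of _ "\<one>"] exI[of _ "1::nat"]) auto
    have "carrier G - ext_set G H y \<subset> carrier G - H" using HH yH y by auto
    then have lt: "card (carrier G - ext_set G H y) < card (carrier G - H)"
      using fin by (intro psubset_card_mono) auto
    obtain \<psi> where p1: "ischar G (carrier G) \<psi>" and p2: "\<forall>h\<in>ext_set G H y. \<psi> h = \<chi>' h"
      using less.hyps[OF lt sub ch] by blast
    have "\<forall>h\<in>H. \<psi> h = \<chi> h"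
    proof
      fix h assume h: "h \<in> H"
      then have "h \<in> ext_set G H y" using HH by blast
      then have "\<psi> h = \<chi>' h" using p2 by blast
      also have "\<chi>' h = \<chi> h" using ext h by blast
      finally show "\<psi> h = \<chi> h" .
    qed
    then show ?thesis using p1 by blast
  qed
qed

lemma sep_char:
  assumes g: "g \<in> carrier G" and g1: "g \<noteq> \<one>"
  shows "\<exists>\<psi>. ischar G (carrier G) \<psi> \<and> \<psi> g \<noteq> 1"
proof -
  have H: "subgroup {\<one>} G" by (rule triv_subgroup)
  have chi0: "ischar G {\<one>} (\<lambda>_. 1)" by (simp add: ischar_def)
  define k where "k = (LEAST k::nat. 0 < k \<and> g [^] k \<in> {\<one>})"
  have kk: "0 < k" "g [^] k \<in> {\<one>}" using least_ex[OF H g] k_def by auto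
  have k1: "k \<noteq> 1" using kk g1 g by auto
  have "1 < k" using kk k1 by simp
  then obtain c :: complex where c: "c ^ k = 1" "c \<noteq> 1" using complex_root_unity_ne1 by blast
  obtain \<chi>' where ch: "ischar G (ext_set G {\<one>} g) \<chi>'" and cg: "\<chi>' g = c"
    using ext_step[OF cgrp fin H chi0 g k_def] c by auto
  have sub: "subgroup (ext_set G {\<one>} g) G" by (rule ext_set_subgroup[OF cgrp fin H g])
  have gH: "g \<in> ext_set G {\<one>} g" unfolding ext_set_def[OF cgrp fin] using g
    by (intro CollectI exI[of _ "\<one>"] exI[of _ "1::nat"]) auto
  obtain \<psi> where "ischar G (carrier G) \<psi>" "\<forall>h\<in>ext_set G {\<one>} g. \<psi> h = \<chi>' h"
    using ext_full[OF sub ch] by blast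
  then show ?thesis using gH cg c by auto
qed

lemma abelian_dim1:
  assumes irr: "irreducible_rep G n \<rho>"
  shows "n = 1"
proof -
  have r: "is_rep G n \<rho>" and n: "n > 0"
    and irrW: "\<And>W. is_subspace n W \<Longrightarrow> (\<forall>x\<in>carrier G. \<forall>w\<in>W. \<rho> x *\<^sub>v w \<in> W) \<Longrightarrow> W = {0\<^sub>v n} \<or> W = carrier_vec n"
    using irr unfolding irreducible_rep_def by auto
  have scal: "\<exists>c. \<rho> x = c \<cdot>\<^sub>m 1\<^sub>m n" if x: "x \<in> carrier G" for x
  proof (rule schur_scalar[OF is_group irr rep_carrier[OF is_group r x]])
    fix y assume y: "y \<in> carrier G"
    show "\<rho> x * \<rho> y = \<rho> y * \<rho> x" using rep_mult[OF is_group r] x y m_comm by metis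
  qed
  define e where "e = (unit_vec n 0 :: complex vec)"
  have ec: "e \<in> carrier_vec n" unfolding e_def by simp
  define W where "W = {a \<cdot>\<^sub>v e | a. True}"
  have sub: "is_subspace n W" unfolding is_subspace_def
  proof (intro conjI ballI allI)
    show "W \<subseteq> carrier_vec n" unfolding W_def using ec by auto
    have "0\<^sub>v n = 0 \<cdot>\<^sub>v e" using ec by (intro eq_vecI) auto
    then show "0\<^sub>v n \<in> W" unfolding W_def by blast
  next
    fix v w assume "v \<in> W" "w \<in> W"
    then obtain a b where "v = a \<cdot>\<^sub>v e" "w = b \<cdot>\<^sub>v e" unfolding W_def by auto
    moreover have "a \<cdot>\<^sub>v e + b \<cdot>\<^sub>v e = (a + b) \<cdot>\<^sub>v e" using ec by (intro eq_vecI) (auto simp: algebra_simps)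
    ultimately show "v + w \<in> W" unfolding W_def by auto
  next
    fix d v assume "v \<in> W"
    then obtain a where "v = a \<cdot>\<^sub>v e" unfolding W_def by auto
    moreover have "d \<cdot>\<^sub>v (a \<cdot>\<^sub>v e) = (d * a) \<cdot>\<^sub>v e" using ec by (intro eq_vecI) auto
    ultimately show "d \<cdot>\<^sub>v v \<in> W" unfolding W_def by auto
  qed
  have inv: "\<forall>x\<in>carrier G. \<forall>w\<in>W. \<rho> x *\<^sub>v w \<in> W"
  proof (intro ballI)
    fix x w assume x: "x \<in> carrier G" and w: "w \<in> W"
    obtain c where c: "\<rho> x = c \<cdot>\<^sub>m 1\<^sub>m n" using scal[OF x] by blast
    obtain a where a: "w = a \<cdot>\<^sub>v e" using w unfolding W_def by auto
    have "\<rho> x *\<^sub>v w = c \<cdot>\<^sub>v (a \<cdot>\<^sub>v e)" unfolding c a using ec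
      by (intro smult_one_mat_vec) simp
    also have "\<dots> = (c * a) \<cdot>\<^sub>v e" using ec by (intro eq_vecI) auto
    finally have "\<rho> x *\<^sub>v w = (c * a) \<cdot>\<^sub>v e" .
    then show "\<rho> x *\<^sub>v w \<in> W" unfolding W_def by auto
  qed
  have "e \<in> W" unfolding W_def using ec by (intro CollectI exI[of _ 1]) (auto intro!: eq_vecI)
  moreover have "e \<noteq> 0\<^sub>v n" unfolding e_def using n by simp
  ultimately have Wc: "W = carrier_vec n" using irrW[OF sub inv] by auto
  show "n = 1"
  proof (rule ccontr)
    assume "n \<noteq> 1"
    then have n2: "1 < n" using n by simp
    have "unit_vec n 1 \<in> W" using Wc by simp
    then obtain a where a: "unit_vec n 1 = a \<cdot>\<^sub>v e" unfolding W_def by auto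
    have "(unit_vec n 1 :: complex vec) $ 1 = 1" using n2 by simp
    moreover have "(a \<cdot>\<^sub>v e) $ 1 = 0" using n2 unfolding e_def by simp
    ultimately show False using a by simp
  qed
qed

lemma Irr_abelian:
  assumes chi: "\<chi> \<in> Irr G"
  shows "ischar G (carrier G) \<chi>" and "\<chi> \<in> extensional (carrier G)"
proof -
  obtain n \<rho> where irr: "irreducible_rep G n \<rho>" and c: "\<chi> = character G \<rho>" using chi unfolding Irr_def by auto
  have n1: "n = 1" by (rule abelian_dim1[OF irr])
  have r: "is_rep G 1 \<rho>" using irr n1 unfolding irreducible_rep_def by auto
  show "ischar G (carrier G) \<chi>" unfolding ischar_def c
    using character_one[OF is_group r] char1_mult[OF is_group r] by simp
  show "\<chi> \<in> extensional (carrier G)" unfolding c character_def by simp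
qed

lemma ischar_Irr:
  assumes "ischar G (carrier G) \<psi>"
  shows "(\<lambda>x\<in>carrier G. \<psi> x) \<in> Irr G"
proof -
  have h: "\<And>x y. x \<in> carrier G \<Longrightarrow> y \<in> carrier G \<Longrightarrow> \<psi> (x \<otimes> y) = \<psi> x * \<psi> y" and o: "\<psi> \<one> = 1"
    using assms unfolding ischar_def by auto
  show ?thesis unfolding Irr_def mem_Collect_eq using one_dim_irr[OF is_group h o]
    by (intro exI[of _ 1] exI[of _ "\<lambda>x. mat 1 1 (\<lambda>_. \<psi> x)"]) simp
qed

lemma col_sum_zero:
  assumes g: "g \<in> carrier G" and g1: "g \<noteq> \<one>"
  shows "(\<Sum>\<chi>\<in>Irr G. \<chi> g) = 0"
proof -
  obtain \<psi> where psi: "ischar G (carrier G) \<psi>" and pg: "\<psi> g \<noteq> 1" using sep_char[OF g g1] by blast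
  have pm: "\<And>x y. x \<in> carrier G \<Longrightarrow> y \<in> carrier G \<Longrightarrow> \<psi> (x \<otimes> y) = \<psi> x * \<psi> y" and p1: "\<psi> \<one> = 1"
    using psi unfolding ischar_def by auto
  have pinv: "\<psi> (inv x) * \<psi> x = 1" if "x \<in> carrier G" for x
    using pm[of "inv x" x] that p1 by simp
  define \<Phi> where "\<Phi> = (\<lambda>\<chi>. \<lambda>x\<in>carrier G. \<psi> x * \<chi> x)"
  define \<Phi>' where "\<Phi>' = (\<lambda>\<chi>. \<lambda>x\<in>carrier G. \<psi> (inv x) * \<chi> x)"
  have PhiI: "\<Phi> \<chi> \<in> Irr G" if chi: "\<chi> \<in> Irr G" for \<chi>
  proof -
    have "ischar G (carrier G) (\<lambda>x. \<psi> x * \<chi> x)"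
      using Irr_abelian(1)[OF chi] psi unfolding ischar_def by (simp add: ac_simps)
    from ischar_Irr[OF this] show ?thesis unfolding \<Phi>_def .
  qed
  have Phi'I: "\<Phi>' \<chi> \<in> Irr G" if chi: "\<chi> \<in> Irr G" for \<chi>
  proof -
    have "\<psi> (inv (a \<otimes> b)) = \<psi> (inv a) * \<psi> (inv b)" if "a \<in> carrier G" "b \<in> carrier G" for a b
      using that pm by (simp add: inv_mult m_comm)
    then have "ischar G (carrier G) (\<lambda>x. \<psi> (inv x) * \<chi> x)"
      using Irr_abelian(1)[OF chi] psi unfolding ischar_def by (simp add: ac_simps)
    from ischar_Irr[OF this] show ?thesis unfolding \<Phi>'_def .
  qed
  have "(\<Sum>\<chi>\<in>Irr G. \<Phi> \<chi> g) = (\<Sum>\<chi>\<in>Irr G. \<chi> g)"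
  proof (rule sum.reindex_bij_witness[of _ \<Phi>' \<Phi>])
    fix a assume a: "a \<in> Irr G"
    show "\<Phi>' (\<Phi> a) = a"
    proof
      fix x show "\<Phi>' (\<Phi> a) x = a x"
        using Irr_abelian(2)[OF a] pinv unfolding \<Phi>_def \<Phi>'_def
        by (cases "x \<in> carrier G") (auto simp: extensional_def mult.assoc[symmetric])
    qed
    show "\<Phi> a \<in> Irr G" by (rule PhiI[OF a])
    show "\<Phi> (\<Phi>' a) = a"
    proof
      fix x show "\<Phi> (\<Phi>' a) x = a x"
        using Irr_abelian(2)[OF a] pinv unfolding \<Phi>_def \<Phi>'_def
        by (cases "x \<in> carrier G") (auto simp: extensional_def mult.assoc[symmetric] mult.commute)
    qed
    show "\<Phi>' a \<in> Irr G" by (rule Phi'I[OF a])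
    show "\<Phi> a g = \<Phi> a g" ..
  qed
  moreover have "(\<Sum>\<chi>\<in>Irr G. \<Phi> \<chi> g) = \<psi> g * (\<Sum>\<chi>\<in>Irr G. \<chi> g)"
    unfolding \<Phi>_def using g by (simp add: sum_distrib_left)
  ultimately have "(1 - \<psi> g) * (\<Sum>\<chi>\<in>Irr G. \<chi> g) = 0" by (simp add: algebra_simps)
  then show ?thesis using pg by simp
qed

lemma dirA: "s_table G = Gamma_e G"
proof -
  have "(\<Sum>C\<in>Conj G - {{\<one>}}. Gamma G C) = 0"
  proof (intro sum.neutral ballI)
    fix C assume C: "C \<in> Conj G - {{\<one>}}"
    then obtain g where g: "g \<in> carrier G" and Cg: "C = conj_class G g" unfolding Conj_def by auto
    have g1: "g \<noteq> \<one>" using C Cg conj_class_one[OF is_group] by auto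
    show "Gamma G C = 0" unfolding Cg Gamma_conj[OF is_group g] using col_sum_zero[OF g g1] .
  qed
  then show ?thesis using s_table_split[OF is_group fin] by simp
qed

end

theorem proposition2p6:
  fixes G :: "('g, 'b) monoid_scheme"
  assumes "group G" and "finite (carrier G)"
    and "\<forall>C\<in>Conj G. \<exists>k::nat. Gamma G C = of_nat k"
  shows "Gamma_e G \<le> s_table G \<and>
         (totally_orthogonal G \<longrightarrow>
            (Gamma_e G \<le> s_table G \<and> (s_table G = Gamma_e G \<longleftrightarrow> comm_group G)))"
  using part1[OF assms] dirB[OF assms] dirA[of G] assms(2) by auto

end
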